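(* Let $n\ge1$ and let $\mathbf{u}_0,\dots,\mathbf{u}_n$ be linearly independent unit vectors in $\mathbf{C}^{n+1}$, regarded as the vertices $[\mathbf{u}_0],\dots,[\mathbf{u}_n]$ of a projective simplex in $\mathbf{CP}^n$. For each $j=0,\dots,n$ let $d_j$ be the Fubini–Study distance from $[\mathbf{u}_j]$ to the hyperplane $\{[\mathbf{x}]:\mathbf{x}\in\operatorname{span}(\mathbf{u}_i:i\ne j)\setminus\{0\}\}$ containing the opposite face, and let $d_{\min}=\min_j d_j$. Then $$d_{\min}^n\le|\det(\mathbf{u}_0,\dots,\mathbf{u}_n)|.$$ Moreover, if equality holds, then at least $n$ of the $n+1$ distances $d_0,\dots,d_n$ equal $d_{\min}$.
   Context: The dot product on $\mathbf{C}^{n+1}$ is the bilinear form $\mathbf{a}\cdot\mathbf{b}=\sum_i a_ib_i$ (standard basis $\mathbf{e}_0,\dots,\mathbf{e}_n$), and $|\mathbf{a}|^2=\mathbf{a}\cdot\overline{\mathbf{a}}$. On $\Lambda^k\mathbf{C}^{n+1}$ the basis $\mathbf{e}_{i_1}\wedge\dots\wedge\mathbf{e}_{i_k}$ ($i_1<\dots<i_k$) is declared orthonormal, giving a norm $|\omega|^2=\omega\cdot\overline\omega$. $\mathbf{CP}^n$ is the set of classes $[\mathbf{v}]$ of nonzero vectors of $\mathbf{C}^{n+1}$ modulo nonzero scalars. The Fubini–Study distance between points represented by unit vectors $\mathbf{v},\mathbf{w}$ is $|\mathbf{v}\wedge\mathbf{w}|$; the distance from a point $[\mathbf{u}]$ ($|\mathbf{u}|=1$)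 to a hyperplane $H$ is the minimum of $|\mathbf{u}\wedge\mathbf{x}|$ over unit vectors $\mathbf{x}$ with $[\mathbf{x}]\in H$. $\det(\mathbf{u}_0,\dots,\mathbf{u}_n)$ is the determinant of the matrix with these rows. *)

theory Defs
  imports "HOL-Analysis.Analysis"
begin

text \<open>Vectors of C^(n+1) are complex^'n with CARD('n) = n+1; the index type is
  linearly ordered so that the standard basis e_0,...,e_n is ordered.\<close>

text \<open>Norm of v wedge w in Lambda^2, basis e_i wedge e_j (i<j) orthonormal:
  v wedge w = sum_{i<j} (v_i w_j - v_j w_i) e_i wedge e_j.\<close>
definition wedge_norm :: "complex^('n::{finite,linorder}) \<Rightarrow> complex^('n::{finite,linorder}) \<Rightarrow> real" where
  "wedge_norm v w = sqrt (\<Sum>(i,j)\<in>{(i,j). i < j}. (cmod (v$i * w$j - v$j * w$i))\<^sup>2)"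

text \<open>Fubini-Study distance from the point [u] (u a unit vector) to the projective
  hyperplane coming from the complex linear subspace S: the minimum (infimum, which
  is attained) of |u wedge x| over unit vectors x in S.\<close>
definition fs_dist_hyp :: "complex^('n::{finite,linorder}) \<Rightarrow> (complex^('n::{finite,linorder})) set \<Rightarrow> real" where
  "fs_dist_hyp u S = Inf {wedge_norm u x | x. x \<in> S \<and> norm x = 1}"

definition vertex_dist :: "('n::{finite,linorder} \<Rightarrow> complex^('n::{finite,linorder})) \<Rightarrow> ('n::{finite,linorder}) \<Rightarrow> real" where
  "vertex_dist u j = fs_dist_hyp (u j) (vec.span (u ` (UNIV - {j})))"

end

theory Submission imports Defs begin

definition herm :: "complex^('n::finite) \<Rightarrow> complex^'n \<Rightarrow> complex" where
  "herm v w = (\<Sum>i\<in>UNIV. v$i * cnj (w$i))"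

lemma herm_cnj: "herm w v = cnj (herm v w)"
  unfolding herm_def by (simp add: mult.commute)

lemma norm_sq_vec: "(norm (v::complex^'n))^2 = (\<Sum>i\<in>UNIV. (cmod (v$i))^2)"
  unfolding norm_vec_def L2_set_def by (simp add: sum_nonneg)

lemma herm_self: "herm v v = of_real ((norm v)^2)"
  unfolding herm_def norm_sq_vec of_real_sum complex_norm_square ..

lemma herm_add_left: "herm (v + w) x = herm v x + herm w x"
  unfolding herm_def by (simp add: distrib_right sum.distrib)
lemma herm_diff_left: "herm (v - w) x = herm v x - herm w x"
  unfolding herm_def by (simp add: left_diff_distrib sum_subtractf)
lemma herm_add_right: "herm x (v + w) = herm x v + herm x w"
  unfolding herm_def by (simp add: distrib_left sum.distrib)
lemma herm_diff_right: "herm x (v - w) = herm x v - herm x w"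
  unfolding herm_def by (simp add: right_diff_distrib sum_subtractf)
lemma herm_scale_left: "herm (c *s v) x = c * herm v x"
  unfolding herm_def by (simp add: sum_distrib_left mult.assoc)
lemma herm_scale_right: "herm x (c *s v) = cnj c * herm x v"
  unfolding herm_def by (simp add: sum_distrib_left mult.assoc mult.left_commute)

lemma herm_Re: "Re (herm v w) = inner v w"
  unfolding herm_def inner_vec_def inner_complex_def Re_sum by simp
lemma herm_Im: "Im (herm v w) = inner v (\<i> *s w)"
  unfolding herm_def inner_vec_def inner_complex_def Im_sum by (simp add: algebra_simps)

lemma herm_zero_iff: "herm v w = 0 \<longleftrightarrow> inner v w = 0 \<and> inner v (\<i> *s w) = 0"
  by (metis complex_eq_iff herm_Im herm_Re zero_complex.simps)

lemma cmod_sq_c: "(complex_of_real (cmod z))^2 = z * cnj z"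
  by (metis complex_norm_square of_real_power)

lemma wedge_sq_all:
  fixes v w :: "complex^('n::{finite,linorder})"
  shows "(\<Sum>p\<in>UNIV. (cmod (v$fst p * w$snd p - v$snd p * w$fst p))\<^sup>2)
       = 2 * ((norm v)^2 * (norm w)^2 - (cmod (herm v w))^2)"
proof -
  have "complex_of_real (\<Sum>p\<in>UNIV. (cmod (v$fst p * w$snd p - v$snd p * w$fst p))\<^sup>2)
     = (\<Sum>p\<in>UNIV. (v$fst p * w$snd p - v$snd p * w$fst p) * cnj (v$fst p * w$snd p - v$snd p * w$fst p))"
    unfolding of_real_sum complex_norm_square ..
  also have "\<dots> = (\<Sum>i\<in>UNIV. \<Sum>j\<in>UNIV. (v$i * w$j - v$j * w$i) * cnj (v$i * w$j - v$j * w$i))"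
    by (simp add: UNIV_Times_UNIV[symmetric] sum.cartesian_product split_def del: UNIV_Times_UNIV)
  also have "\<dots> = (\<Sum>i\<in>UNIV. \<Sum>j\<in>UNIV. (v$i * cnj (v$i)) * (w$j * cnj (w$j)) + (w$i * cnj (w$i)) * (v$j * cnj (v$j))
       - (v$i * cnj (w$i)) * (w$j * cnj (v$j)) - (w$i * cnj (v$i)) * (v$j * cnj (w$j)))"
    by (intro sum.cong refl) (simp add: algebra_simps)
  also have "\<dots> = herm v v * herm w w + herm w w * herm v v - herm v w * herm w v - herm w v * herm v w"
    unfolding herm_def sum_subtractf sum.distrib sum_product ..
  also have "\<dots> = 2 * (herm v v * herm w w) - herm v w * herm w v - herm w v * herm v w"
    by simp
  also have "\<dots> = complex_of_real (2 * ((norm v)^2 * (norm w)^2 - (cmod (herm v w))^2))"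
    using herm_cnj[of w v] by (simp add: herm_self cmod_sq_c)
  finally show ?thesis using of_real_eq_iff by blast
qed

lemma wedge_norm_sq:
  fixes v w :: "complex^('n::{finite,linorder})"
  shows "(wedge_norm v w)^2 = (norm v)^2 * (norm w)^2 - (cmod (herm v w))^2"
proof -
  define f where "f = (\<lambda>p::'n\<times>'n. (cmod (v$fst p * w$snd p - v$snd p * w$fst p))\<^sup>2)"
  define A where "A = ({(i,j). i < j} :: ('n\<times>'n) set)"
  define B where "B = ({(i,j). j < i} :: ('n\<times>'n) set)"
  define C where "C = ({(i,j). i = j} :: ('n\<times>'n) set)"
  have U: "UNIV = A \<union> B \<union> C" unfolding A_def B_def C_def by (auto simp: not_less_iff_gr_or_eq)
  have "sum f UNIV = sum f A + sum f B + sum f C"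
  proof -
    have d1: "A \<inter> B = {}" unfolding A_def B_def by auto
    have d2: "(A \<union> B) \<inter> C = {}" unfolding A_def B_def C_def by auto
    show ?thesis unfolding U
      by (simp add: sum.union_disjoint[OF _ _ d2] sum.union_disjoint[OF _ _ d1])
  qed
  moreover have "sum f C = 0" unfolding C_def f_def by (intro sum.neutral) auto
  moreover have "B = prod.swap ` A" unfolding A_def B_def by auto
  hence "sum f B = sum f A"
  proof -
    have "sum f (prod.swap ` A) = sum (f \<circ> prod.swap) A" by (rule sum.reindex) simp
    also have "\<dots> = sum f A"
    proof (intro sum.cong refl)
      fix p assume "p \<in> A"
      show "(f \<circ> prod.swap) p = f p" unfolding f_def
        by (simp add: norm_minus_commute mult.commute)
    qed
    finally show ?thesis using \<open>B = prod.swap ` A\<close> by simp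
  qed
  ultimately have "sum f UNIV = 2 * sum f A" by simp
  moreover have "(wedge_norm v w)^2 = sum f A"
    unfolding wedge_norm_def f_def A_def by (simp add: sum_nonneg split_def)
  ultimately show ?thesis using wedge_sq_all[of v w] unfolding f_def by simp
qed

lemma scaleR_smult: "r *\<^sub>R (v::complex^'n) = complex_of_real r *s v"
  unfolding vec_eq_iff vector_scaleR_component vector_smult_component by (simp add: scaleR_conv_of_real)

lemma vspan_subspace: "subspace (vec.span (A::(complex^'n) set))"
  unfolding subspace_def
  by (auto simp: vec.span_zero vec.span_add scaleR_smult intro: vec.span_scale)

lemma proj_exists:
  fixes A :: "(complex^'n) set" and x :: "complex^'n"
  obtains g where "x - g \<in> vec.span A" "\<And>w. w \<in> vec.span A \<Longrightarrow> herm g w = 0"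
proof -
  let ?W = "vec.span A"
  obtain y z where y: "y \<in> span ?W" and z: "\<And>w. w \<in> span ?W \<Longrightarrow> orthogonal z w" and xyz: "x = y + z"
    using orthogonal_subspace_decomp_exists[of ?W x] by blast
  have sW: "span ?W = ?W" using vspan_subspace span_eq_iff by blast
  show ?thesis
  proof
    show "x - z \<in> ?W" using y sW xyz by simp
    fix w assume w: "w \<in> ?W"
    have "\<i> *s w \<in> ?W" using w by (rule vec.span_scale)
    thus "herm z w = 0" using z w sW unfolding herm_zero_iff orthogonal_def by auto
  qed
qed

lemma herm_orth_split:
  assumes "\<forall>w\<in>vec.span A. herm g w = 0" "u - g \<in> vec.span A" "x \<in> vec.span A"
  shows "herm u x = herm (u - g) x"
  using assms by (simp add: herm_diff_left)

lemma wedge_le: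
  fixes u g a :: "complex^('n::{finite,linorder})"
  assumes u1: "norm u = 1" and ug: "u - g \<in> vec.span A" and orth: "\<forall>w\<in>vec.span A. herm g w = 0"
    and a: "a \<in> vec.span A" "norm a = 1"
  shows "\<exists>x\<in>vec.span A. norm x = 1 \<and> wedge_norm u x \<le> norm g"
proof -
  define p where "p = u - g"
  have up: "u = g + p" unfolding p_def by simp
  have hgp: "herm g p = 0" using orth ug p_def by auto
  have hpg: "herm p g = 0" using hgp herm_cnj[of p g] by simp
  have "herm u u = herm g g + herm p p" unfolding up herm_add_left herm_add_right hgp hpg by simp
  hence "complex_of_real ((norm u)^2) = of_real ((norm g)^2 + (norm p)^2)"
    unfolding herm_self of_real_add by simp
  hence nsum: "(norm g)^2 + (norm p)^2 = 1" unfolding u1 of_real_eq_iff by simp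
  have hux: "herm u x = herm p x" if "x \<in> vec.span A" for x
  proof -
    have "herm g x = 0" using orth that by blast
    thus ?thesis unfolding up herm_add_left by simp
  qed
  have wsq: "(wedge_norm u x)^2 = 1 - (cmod (herm p x))^2" if "x \<in> vec.span A" "norm x = 1" for x
    using wedge_norm_sq[of u x] unfolding hux[OF that(1)] u1 that(2) by simp
  have wnn: "wedge_norm u x \<ge> 0" for x unfolding wedge_norm_def by (auto intro!: real_sqrt_ge_zero sum_nonneg)
  show ?thesis
  proof (cases "p = 0")
    case True
    have "(wedge_norm u a)^2 \<le> (norm g)^2" using wsq[OF a] nsum True by simp
    hence "wedge_norm u a \<le> norm g" by (rule power2_le_imp_le) simp
    thus ?thesis using a by blast
  next
    case False
    define x where "x = (1 / norm p) *\<^sub>R p"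
    have pA: "p \<in> vec.span A" using ug p_def by simp
    have xA: "x \<in> vec.span A" unfolding x_def scaleR_smult by (rule vec.span_scale) (rule pA)
    have x1: "norm x = 1" unfolding x_def using False by simp
    have "herm p x = cnj (complex_of_real (1 / norm p)) * complex_of_real ((norm p)^2)"
      unfolding x_def scaleR_smult herm_scale_right herm_self ..
    also have "\<dots> = complex_of_real (norm p)" using False
      by (simp add: power2_eq_square)
    finally have "cmod (herm p x) = norm p" by simp
    hence "(wedge_norm u x)^2 = (norm g)^2" using wsq[OF xA x1] nsum by simp
    hence "wedge_norm u x \<le> norm g" using power2_le_imp_le[of "wedge_norm u x" "norm g"] by simp
    thus ?thesis using xA x1 by blast
  qed
qed

lemma perm_lin_exists_less:
  fixes p :: "'n::{finite,linorder} \<Rightarrow> 'n"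
  assumes p: "p permutes UNIV" and nid: "p \<noteq> id"
  shows "\<exists>i. p i < i"
proof (rule ccontr)
  assume "\<not> (\<exists>i. p i < i)"
  hence ge: "\<And>i. i \<le> p i" by (simp add: not_less)
  define M where "M = {i. p i \<noteq> i}"
  have Mne: "M \<noteq> {}"
  proof
    assume "M = {}"
    hence "\<And>i. p i = i" unfolding M_def by blast
    hence "p = id" by (simp add: fun_eq_iff)
    thus False using nid by simp
  qed
  define m where "m = Max M"
  have mM: "m \<in> M" unfolding m_def using Mne by simp
  hence gt: "m < p m" using ge[of m] unfolding M_def by simp
  have injp: "inj p" using p permutes_inj by blast
  have "p (p m) \<noteq> p m"
  proof
    assume "p (p m) = p m"
    hence "p m = m" using injD[OF injp] by blast
    thus False using mM unfolding M_def by simp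
  qed
  hence "p m \<in> M" unfolding M_def by simp
  hence "p m \<le> m" unfolding m_def by simp
  thus False using gt by simp
qed

lemma det_upper_lin:
  fixes A :: "'a::comm_ring_1^'n::{finite,linorder}^'n::{finite,linorder}"
  assumes ld: "\<And>i j. j < i \<Longrightarrow> A$i$j = 0"
  shows "det A = prod (\<lambda>i. A$i$i) (UNIV:: 'n set)"
proof -
  let ?U = "UNIV:: 'n set"
  let ?PU = "{p. p permutes ?U}"
  let ?pp = "(\<lambda>p. of_int (sign p) * prod (\<lambda>i. A$i$p i) (UNIV :: 'n set))"
  have fU: "finite ?U"
    by simp
  have id0: "{id} \<subseteq> ?PU"
    by (auto simp: permutes_id)
  have p0: "\<forall>p \<in> ?PU -{id}. ?pp p = 0"
  proof
    fix p
    assume p: "p \<in> ?PU - {id}"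
    then obtain i where i: "p i < i"
      using perm_lin_exists_less[of p] by blast
    from ld[OF i] have "\<exists>i \<in> ?U. A$i$p i = 0"
      by blast
    with prod_zero[OF fU]  show "?pp p = 0"
      by force
  qed
  from sum.mono_neutral_cong_left[OF finite_permutations[OF fU] id0 p0] show ?thesis
    unfolding det_def by (simp add: sign_id)
qed

lemma det_cnj: "det (\<chi> i j. cnj (A$i$j)) = cnj (det (A::complex^'n^'n))"
  unfolding det_def by (simp add: cnj_sum cnj_prod)

lemma wedge_nonneg: "wedge_norm u x \<ge> 0"
  unfolding wedge_norm_def by (auto intro!: real_sqrt_ge_zero sum_nonneg)

lemma vd_le:
  assumes "x \<in> vec.span (u ` (UNIV - {k}))" "norm x = 1"
  shows "vertex_dist u k \<le> wedge_norm (u k) x"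
  unfolding vertex_dist_def fs_dist_hyp_def
proof (rule cInf_lower)
  show "bdd_below {wedge_norm (u k) x |x. x \<in> vec.span (u ` (UNIV - {k})) \<and> norm x = 1}"
    by (rule bdd_belowI[where m=0]) (auto simp: wedge_nonneg)
qed (use assms in auto)

lemma vd_nonneg:
  assumes "x \<in> vec.span (u ` (UNIV - {k}))" "norm x = 1"
  shows "vertex_dist u k \<ge> 0"
  unfolding vertex_dist_def fs_dist_hyp_def
  by (rule cInf_greatest) (use assms wedge_nonneg in auto)

lemma key_first:
  fixes u :: "'n::{finite,linorder} \<Rightarrow> complex^('n::{finite,linorder})"
  assumes injU: "inj u" and ind: "vec.independent (range u)" and unit: "\<And>j. norm (u j) = 1"
  shows "(\<Prod>k\<in>UNIV - {Min UNIV}. vertex_dist u k) \<le> cmod (det (\<chi> j. u j)) \<and> cmod (det (\<chi> j. u j)) > 0"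
proof -
  define V where "V k = vec.span (u ` {i. i < k})" for k
  have "\<exists>g. u k - g \<in> V k \<and> (\<forall>w\<in>V k. herm g w = 0)" for k
  proof -
    obtain g where "u k - g \<in> V k" "\<And>w. w \<in> V k \<Longrightarrow> herm g w = 0"
      using proj_exists[of "u k" "u ` {i. i < k}"] unfolding V_def by blast
    thus ?thesis by blast
  qed
  then obtain g where g1: "\<And>k. u k - g k \<in> V k" and g2: "\<And>k w. w \<in> V k \<Longrightarrow> herm (g k) w = 0"
    by metis
  have uV: "u l \<in> V k" if "l < k" for l k
    unfolding V_def using that by (intro vec.span_base) auto
  have Vmono: "V k \<subseteq> V l" if "k \<le> l" for k l
    unfolding V_def using that by (intro vec.span_mono) auto
  have gV: "g k \<in> V l" if "k < l" for k l
  proof -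
    have a: "u k \<in> V l" using uV[OF that] .
    have b: "u k - g k \<in> V l" using g1[of k] Vmono[of k l] that by (meson less_imp_le subsetD)
    have "u k - (u k - g k) \<in> V l" using a b unfolding V_def by (rule vec.span_diff)
    thus ?thesis by simp
  qed
  have h1: "herm (g k) (u l) = 0" if "l < k" for k l using g2 uV that by blast
  have h2: "herm (g k) (g l) = 0" if "k \<noteq> l" for k l
  proof (cases "l < k")
    case True thus ?thesis using g2 gV by blast
  next
    case False
    hence "k < l" using that by simp
    hence "herm (g l) (g k) = 0" using g2 gV by blast
    thus ?thesis using herm_cnj[of "g l" "g k"] by simp
  qed
  have h3: "herm (g k) (u k) = complex_of_real ((norm (g k))^2)" for k
  proof -
    have "u k = g k + (u k - g k)" by simp
    hence "herm (g k) (u k) = herm (g k) (g k) + herm (g k) (u k - g k)"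
      by (metis herm_add_right)
    thus ?thesis using g2[OF g1[of k]] by (simp add: herm_self)
  qed
  have gnz: "g k \<noteq> 0" for k
  proof
    assume "g k = 0"
    hence "u k \<in> V k" using g1[of k] by simp
    moreover have "V k \<subseteq> vec.span (range u - {u k})"
      unfolding V_def using injU by (intro vec.span_mono) (auto dest: injD)
    ultimately have "vec.dependent (range u)" unfolding vec.dependent_def by blast
    thus False using ind by simp
  qed
  define P where "P = (\<Prod>k\<in>UNIV. norm (g k))"
  have Ppos: "P > 0" unfolding P_def using gnz by (intro prod_pos) simp
  define U where "U = (\<chi> j. u j)"
  define G where "G = (\<chi> j. g j)"
  define CU where "CU = (\<chi> m l. cnj (u l $ m))"
  define CG where "CG = (\<chi> m l. cnj (g l $ m))"
  have GCU: "(G ** CU)$k$l = herm (g k) (u l)" for k l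
    unfolding G_def CU_def matrix_matrix_mult_def herm_def by simp
  have GCG: "(G ** CG)$k$l = herm (g k) (g l)" for k l
    unfolding G_def CG_def matrix_matrix_mult_def herm_def by simp
  have dCU: "det CU = cnj (det U)"
  proof -
    have "CU = transpose (\<chi> i j. cnj (U$i$j))" unfolding CU_def U_def transpose_def by simp
    thus ?thesis using det_cnj[of U] by simp
  qed
  have dCG: "det CG = cnj (det G)"
  proof -
    have "CG = transpose (\<chi> i j. cnj (G$i$j))" unfolding CG_def G_def transpose_def by simp
    thus ?thesis using det_cnj[of G] by simp
  qed
  have PP: "(\<Prod>k\<in>UNIV. complex_of_real ((norm (g k))^2)) = complex_of_real (P^2)"
    unfolding P_def prod_power_distrib of_real_prod ..
  have e1: "det G * cnj (det U) = complex_of_real (P^2)"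
  proof -
    have "det (G ** CU) = (\<Prod>k\<in>UNIV. (G ** CU)$k$k)"
      by (rule det_upper_lin) (simp add: GCU h1)
    thus ?thesis using PP by (simp add: det_mul dCU GCU h3)
  qed
  have e2: "det G * cnj (det G) = complex_of_real (P^2)"
  proof -
    have "det (G ** CG) = (\<Prod>k\<in>UNIV. (G ** CG)$k$k)"
      by (rule det_diagonal) (simp add: GCG h2)
    thus ?thesis using PP by (simp add: det_mul dCG GCG herm_self)
  qed
  have c1: "cmod (det G) * cmod (det U) = P^2"
    using arg_cong[OF e1, of cmod] Ppos by (simp add: norm_mult norm_power)
  have "cmod (det G * cnj (det G)) = P^2" using arg_cong[OF e2, of cmod] by (simp add: norm_power)
  hence "(cmod (det G))^2 = P^2" by (simp add: norm_mult power2_eq_square)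
  hence "cmod (det G) = P" using Ppos by (simp add: power2_eq_iff_nonneg)
  hence detU: "cmod (det U) = P" using c1 Ppos by (simp add: power2_eq_square)
  define k0 where "k0 = Min (UNIV :: 'n set)"
  have k0le: "k0 \<le> k" for k unfolding k0_def by simp
  have "{i. i < k0} = {}" using k0le by (auto simp: not_less[symmetric])
  hence "V k0 = {0}" unfolding V_def by (simp add: vec.span_empty)
  hence "g k0 = u k0" using g1[of k0] by simp
  hence gk0: "norm (g k0) = 1" using unit by simp
  have dle: "vertex_dist u k \<le> norm (g k)" and dnn: "vertex_dist u k \<ge> 0" if "k \<in> UNIV - {k0}" for k
  proof -
    have lt: "k0 < k" using that k0le[of k] by (simp add: order.order_iff_strict)
    obtain x where x: "x \<in> V k" "norm x = 1" "wedge_norm (u k) x \<le> norm (g k)"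
      using wedge_le[where u="u k" and g="g k" and A="u ` {i. i < k}" and a="u k0"] unit[of k] g1[of k] g2[where k=k] uV[OF lt] unit[of k0]
      unfolding V_def by blast
    have "V k \<subseteq> vec.span (u ` (UNIV - {k}))" unfolding V_def by (intro vec.span_mono) auto
    hence xH: "x \<in> vec.span (u ` (UNIV - {k}))" using x by blast
    show "vertex_dist u k \<le> norm (g k)" using vd_le[OF xH x(2)] x(3) by simp
    show "vertex_dist u k \<ge> 0" using vd_nonneg[OF xH x(2)] .
  qed
  have "(\<Prod>k\<in>UNIV - {k0}. vertex_dist u k) \<le> (\<Prod>k\<in>UNIV - {k0}. norm (g k))"
    using dle dnn by (intro prod_mono) auto
  also have "\<dots> = P" unfolding P_def using gk0 by (simp add: prod.remove[of UNIV k0])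
  finally show ?thesis using detU Ppos unfolding U_def k0_def by simp
qed

lemma key_any:
  fixes u :: "'n::{finite,linorder} \<Rightarrow> complex^('n::{finite,linorder})"
  assumes injU: "inj u" and ind: "vec.independent (range u)" and unit: "\<And>j. norm (u j) = 1"
  shows "(\<Prod>k\<in>UNIV - {j}. vertex_dist u k) \<le> cmod (det (\<chi> j. u j)) \<and> cmod (det (\<chi> j. u j)) > 0"
proof -
  define k0 where "k0 = Min (UNIV :: 'n set)"
  define t where "t = Transposition.transpose j k0"
  have tp: "t permutes UNIV" unfolding t_def by (rule permutes_swap_id) auto
  have tinj: "inj t" using tp permutes_inj by blast
  have tsurj: "range t = UNIV" using tp permutes_image by blast
  define w where "w = (\<lambda>i. u (t i))"
  have injw: "inj w" unfolding w_def using injU tinj by (simp add: inj_def)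
  have rw: "range w = range u" unfolding w_def using tsurj by (metis image_image)
  have unitw: "\<And>i. norm (w i) = 1" unfolding w_def using unit by simp
  from key_first[OF injw _ unitw] ind rw
  have kf: "(\<Prod>k\<in>UNIV - {Min UNIV}. vertex_dist w k) \<le> cmod (det (\<chi> j. w j))" "cmod (det (\<chi> j. w j)) > 0"
    by auto
  have "det (\<chi> i. w i) = det (\<chi> i. (\<chi> j. u j) $ t i)" unfolding w_def by simp
  also have "\<dots> = of_int (sign t) * det (\<chi> j. u j)" by (rule det_permute_rows[OF tp])
  finally have dw: "cmod (det (\<chi> i. w i)) = cmod (det (\<chi> j. u j))"
    by (cases rule: sign_cases[of t]) (simp_all add: norm_mult)
  have vw: "vertex_dist w k = vertex_dist u (t k)" for k
  proof -
    have "t ` (UNIV - {k}) = UNIV - {t k}" using tinj tsurj by (metis image_set_diff image_empty image_insert)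
    hence "w ` (UNIV - {k}) = u ` (UNIV - {t k})" unfolding w_def by (metis image_image)
    thus ?thesis unfolding vertex_dist_def w_def by simp
  qed
  have tk0: "t k0 = j" unfolding t_def by simp
  have "(\<Prod>k\<in>UNIV - {k0}. vertex_dist w k) = (\<Prod>k\<in>UNIV - {k0}. vertex_dist u (t k))"
    using vw by simp
  also have "\<dots> = (\<Prod>k\<in>t ` (UNIV - {k0}). vertex_dist u k)"
    by (rule prod.reindex[symmetric, unfolded comp_def]) (use tinj in \<open>auto simp: inj_on_def\<close>)
  also have "t ` (UNIV - {k0}) = UNIV - {j}" using tinj tsurj tk0 by (metis image_set_diff image_empty image_insert)
  finally show ?thesis using kf dw unfolding k0_def by simp
qed

theorem mainTheorem8:
  fixes u :: "'n::{finite,linorder} \<Rightarrow> complex^('n::{finite,linorder})"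
  assumes n1: "CARD('n::{finite,linorder}) \<ge> 2"
    and indep: "inj u" "vec.independent (range u)"
    and unit: "\<And>j. norm (u j) = 1"
  shows "(Min (range (vertex_dist u))) ^ (CARD('n::{finite,linorder}) - 1) \<le> cmod (det (\<chi> j. u j))
    \<and> ((Min (range (vertex_dist u))) ^ (CARD('n::{finite,linorder}) - 1) = cmod (det (\<chi> j. u j)) \<longrightarrow>
           CARD('n::{finite,linorder}) - 1 \<le> card {j. vertex_dist u j = Min (range (vertex_dist u))})"
proof -
  define d where "d = vertex_dist u"
  define m where "m = Min (range d)"
  define N where "N = CARD('n) - 1"
  have mle: "m \<le> d k" for k unfolding m_def by simp
  have dnn: "d k \<ge> 0" for k
  proof -
    have "card (UNIV - {k}) \<ge> 1" using n1 by (simp add: card_Diff_singleton)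
    then obtain i where i: "i \<in> UNIV - {k}" by (metis card.empty ex_in_conv not_one_le_zero)
    have "u i \<in> vec.span (u ` (UNIV - {k}))" using i by (intro vec.span_base) auto
    thus ?thesis unfolding d_def using vd_nonneg unit by blast
  qed
  have m0: "m \<ge> 0" unfolding m_def using dnn by (simp add: Min_ge_iff)
  have cardA: "card (UNIV - {j}) = N" for j :: 'n unfolding N_def by (simp add: card_Diff_singleton)
  have N1: "N \<ge> 1" unfolding N_def using n1 by simp
  have lowb: "m ^ card B \<le> (\<Prod>k\<in>B. d k)" for B :: "'n set"
  proof -
    have "(\<Prod>k\<in>B. m) \<le> (\<Prod>k\<in>B. d k)" using m0 mle by (intro prod_mono) auto
    thus ?thesis by simp
  qed
  have part1: "m ^ N \<le> cmod (det (\<chi> j. u j))" for j :: 'n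
    using lowb[of "UNIV - {j}"] key_any[OF indep unit, of j] unfolding cardA d_def by simp
  have part2: "N \<le> card {j. d j = m}" if eq: "m ^ N = cmod (det (\<chi> j. u j))"
  proof -
    define j0 :: 'n where "j0 = undefined"
    have kb: "(\<Prod>k\<in>UNIV - {j0}. d k) \<le> m ^ N" and pos: "m ^ N > 0"
      using key_any[OF indep unit, of j0] eq unfolding d_def by auto
    have mpos: "m > 0"
    proof (rule ccontr)
      assume "\<not> m > 0"
      hence "m = 0" using m0 by simp
      hence "m ^ N = 0" using N1 by simp
      thus False using pos by (simp add: power_0_left)
    qed
    have "d k = m" if k: "k \<in> UNIV - {j0}" for k
    proof (rule ccontr)
      assume "d k \<noteq> m"
      hence dk: "d k > m" using mle[of k] by simp
      have "(\<Prod>k\<in>UNIV - {j0}. d k) = d k * (\<Prod>k\<in>UNIV - {j0} - {k}. d k)"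
        using k by (simp add: prod.remove)
      have "card (UNIV - {j0} - {k}) = N - 1" using k cardA[of j0] by (simp add: card_Diff_singleton)
      hence X: "m ^ (N - 1) \<le> (\<Prod>k\<in>UNIV - {j0} - {k}. d k)" using lowb[of "UNIV - {j0} - {k}"] by simp
      have mp: "m ^ (N - 1) > 0" using mpos by simp
      have "d k * (\<Prod>k\<in>UNIV - {j0} - {k}. d k) \<ge> d k * m ^ (N - 1)"
        using X dnn[of k] by (rule mult_left_mono)
      moreover have "d k * m ^ (N - 1) > m * m ^ (N - 1)" using dk mp by (rule mult_strict_right_mono)
      ultimately have "(\<Prod>k\<in>UNIV - {j0}. d k) > m * m ^ (N - 1)"
        using \<open>(\<Prod>k\<in>UNIV - {j0}. d k) = d k * (\<Prod>k\<in>UNIV - {j0} - {k}. d k)\<close> by linarith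
      moreover have "m * m ^ (N - 1) = m ^ N"
      proof -
        obtain N' where "N = Suc N'" using N1 by (cases N) auto
        thus ?thesis by simp
      qed
      ultimately show False using kb by simp
    qed
    hence "UNIV - {j0} \<subseteq> {j. d j = m}" by blast
    hence "card (UNIV - {j0}) \<le> card {j. d j = m}" by (intro card_mono) auto
    thus ?thesis using cardA by simp
  qed
  show ?thesis using part1 part2 unfolding d_def m_def N_def by blast
qed

end
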